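(* Let $Q_1=(Q_{1,1},\ldots,Q_{1,d})$ and $Q_2=(Q_{2,1},\ldots,Q_{2,d})$ be the expected relative abundance vectors of two populations. (i) If $I_{0,1},I_{0,2}\subset[d]$ are two reference sets (with constants $b_1,b_2>0$ respectively) satisfying $|I_{0,1}|>d/2$ and $|I_{0,2}|>d/2$, then the reference-based null and alternative hypotheses defined using $I_{0,1}$ coincide with those defined using $I_{0,2}$; that is, the hypotheses are well defined when the reference set is assumed to have more than $d/2$ elements. (ii) In contrast, there exist instances $(Q_1,Q_2)$ with two reference sets $I_{0,1}$, $I_{0,2}$ satisfying $|I_{0,1}|,|I_{0,2}|\le d/2$ such that the null hypotheses defined by $I_{0,1}$ and by $I_{0,2}$ contradict each other (a component is null under one reference set and non-null under the other).
   Context: There are $d$ components, $[d]=\{1,\ldots,d\}$. For two populations $\pi_1,\pi_2$ of absolute abundance vectors $A=(A_1,\ldots,A_d)\in[0,\infty)^d$, the relative abundance is $P_i=A_i/\sum_{i'=1}^dA_{i'}$ and $Q_{k,i}=\mathbb{E}_{\pi_k}(P_i)$ for $k=1,2$. A subset $I_0\subset[d]$ is called a reference set if there is a constant $b>0$ with $Q_{1,i}=bQ_{2,i}$ for all $i\in I_0$. Given a reference set $I_0$, the reference-based hypotheses for component $i$ are $H_{i,0}: Q_{1,i}/\sum_{i'\in I_0}Q_{1,i'}=Q_{2,i}/\sum_{i'\in I_0}Q_{2,i'}$ versus $H_{i,1}: Q_{1,i}/\sum_{i'\in I_0}Q_{1,i'}\ne Q_{2,i}/\sum_{i'\in I_0}Q_{2,i'}$.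 *)

theory Defs
  imports Complex_Main
begin

text \<open>An expected relative abundance vector
  is modelled as a function Q :: nat => real whose values on {1..d} are positive
  and sum to 1 (values outside {1..d} are irrelevant).\<close>

definition rel_abund_vec :: "nat \<Rightarrow> (nat \<Rightarrow> real) \<Rightarrow> bool" where
  "rel_abund_vec d Q \<longleftrightarrow> (\<forall>i\<in>{1..d}. 0 < Q i) \<and> (\<Sum>i=1..d. Q i) = 1"

definition reference_set_with ::
  "nat \<Rightarrow> (nat \<Rightarrow> real) \<Rightarrow> (nat \<Rightarrow> real) \<Rightarrow> nat set \<Rightarrow> real \<Rightarrow> bool" where
  "reference_set_with d Q1 Q2 I0 b \<longleftrightarrow>
     I0 \<subseteq> {1..d} \<and> I0 \<noteq> {} \<and> 0 < b \<and> (\<forall>i\<in>I0. Q1 i = b * Q2 i)"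

definition null_hyp :: "(nat \<Rightarrow> real) \<Rightarrow> (nat \<Rightarrow> real) \<Rightarrow> nat set \<Rightarrow> nat \<Rightarrow> bool" where
  "null_hyp Q1 Q2 I0 i \<longleftrightarrow>
     Q1 i / (\<Sum>i'\<in>I0. Q1 i') = Q2 i / (\<Sum>i'\<in>I0. Q2 i')"

definition alt_hyp :: "(nat \<Rightarrow> real) \<Rightarrow> (nat \<Rightarrow> real) \<Rightarrow> nat set \<Rightarrow> nat \<Rightarrow> bool" where
  "alt_hyp Q1 Q2 I0 i \<longleftrightarrow>
     Q1 i / (\<Sum>i'\<in>I0. Q1 i') \<noteq> Q2 i / (\<Sum>i'\<in>I0. Q2 i')"

end

theory Submission
  imports Defs
begin

lemma null_char:
  assumes "reference_set_with d Q1 Q2 I b" "rel_abund_vec d Q2"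
  shows "null_hyp Q1 Q2 I i \<longleftrightarrow> Q1 i = b * Q2 i"
proof -
  have sub: "I \<subseteq> {1..d}" and ne: "I \<noteq> {}" and b: "0 < b" and eq: "\<forall>j\<in>I. Q1 j = b * Q2 j"
    using assms(1) unfolding reference_set_with_def by auto
  have fin: "finite I" using sub finite_subset by blast
  have pos: "\<forall>j\<in>I. 0 < Q2 j" using assms(2) sub unfolding rel_abund_vec_def by auto
  have S: "(\<Sum>j\<in>I. Q1 j) = b * (\<Sum>j\<in>I. Q2 j)"
    using eq by (simp add: sum_distrib_left)
  have Sp: "0 < (\<Sum>j\<in>I. Q2 j)" using sum_pos[OF fin ne] pos by auto
  show ?thesis unfolding null_hyp_def S using Sp b
    by (auto simp: field_simps)
qed

theorem proposition1:
  shows "(\<forall>(d::nat) Q1 Q2 I01 I02 b1 b2.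
            rel_abund_vec d Q1 \<and> rel_abund_vec d Q2 \<and>
            reference_set_with d Q1 Q2 I01 b1 \<and> reference_set_with d Q1 Q2 I02 b2 \<and>
            real (card I01) > real d / 2 \<and> real (card I02) > real d / 2 \<longrightarrow>
            (\<forall>i\<in>{1..d}. (null_hyp Q1 Q2 I01 i \<longleftrightarrow> null_hyp Q1 Q2 I02 i) \<and>
                         (alt_hyp Q1 Q2 I01 i \<longleftrightarrow> alt_hyp Q1 Q2 I02 i)))
       \<and>
         (\<exists>(d::nat) Q1 Q2 I01 I02 b1 b2 i.
            rel_abund_vec d Q1 \<and> rel_abund_vec d Q2 \<and>
            reference_set_with d Q1 Q2 I01 b1 \<and> reference_set_with d Q1 Q2 I02 b2 \<and>
            real (card I01) \<le> real d / 2 \<and> real (card I02) \<le> real d / 2 \<and>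
            i \<in> {1..d} \<and> null_hyp Q1 Q2 I01 i \<and> alt_hyp Q1 Q2 I02 i)"
proof
  show "\<forall>(d::nat) Q1 Q2 I01 I02 b1 b2.
            rel_abund_vec d Q1 \<and> rel_abund_vec d Q2 \<and>
            reference_set_with d Q1 Q2 I01 b1 \<and> reference_set_with d Q1 Q2 I02 b2 \<and>
            real (card I01) > real d / 2 \<and> real (card I02) > real d / 2 \<longrightarrow>
            (\<forall>i\<in>{1..d}. (null_hyp Q1 Q2 I01 i \<longleftrightarrow> null_hyp Q1 Q2 I02 i) \<and>
                         (alt_hyp Q1 Q2 I01 i \<longleftrightarrow> alt_hyp Q1 Q2 I02 i))"
  proof (intro allI impI)
    fix d :: nat and Q1 Q2 I01 I02 b1 b2
    assume A: "rel_abund_vec d Q1 \<and> rel_abund_vec d Q2 \<and>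
            reference_set_with d Q1 Q2 I01 b1 \<and> reference_set_with d Q1 Q2 I02 b2 \<and>
            real (card I01) > real d / 2 \<and> real (card I02) > real d / 2"
    have s1: "I01 \<subseteq> {1..d}" and s2: "I02 \<subseteq> {1..d}"
      using A unfolding reference_set_with_def by auto
    have f1: "finite I01" and f2: "finite I02" using s1 s2 finite_subset by blast+
    have "card (I01 \<union> I02) \<le> d"
      using card_mono[of "{1..d}" "I01 \<union> I02"] s1 s2 by auto
    moreover have "card I01 + card I02 = card (I01 \<union> I02) + card (I01 \<inter> I02)"
      using card_Un_Int[OF f1 f2] .
    moreover have "card I01 + card I02 > d" using A by linarith
    ultimately have "card (I01 \<inter> I02) > 0" by linarith
    then obtain j where j1: "j \<in> I01" and j2: "j \<in> I02"
      by (metis card_gt_0_iff disjoint_iff)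
    have "Q1 j = b1 * Q2 j" "Q1 j = b2 * Q2 j"
      using A j1 j2 unfolding reference_set_with_def by auto
    moreover have "0 < Q2 j" using A s1 j1 unfolding rel_abund_vec_def by auto
    ultimately have bb: "b1 = b2" by simp
    have n1: "\<And>i. null_hyp Q1 Q2 I01 i \<longleftrightarrow> Q1 i = b1 * Q2 i"
      using null_char A by blast
    have n2: "\<And>i. null_hyp Q1 Q2 I02 i \<longleftrightarrow> Q1 i = b2 * Q2 i"
      using null_char A by blast
    show "\<forall>i\<in>{1..d}. (null_hyp Q1 Q2 I01 i \<longleftrightarrow> null_hyp Q1 Q2 I02 i) \<and>
                         (alt_hyp Q1 Q2 I01 i \<longleftrightarrow> alt_hyp Q1 Q2 I02 i)"
      using n1 n2 bb unfolding alt_hyp_def null_hyp_def[symmetric] by auto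
  qed
next
  define Q1 :: "nat \<Rightarrow> real" where "Q1 = (\<lambda>i. if i = 1 then 1/3 else 2/3)"
  define Q2 :: "nat \<Rightarrow> real" where "Q2 = (\<lambda>i. 1/2)"
  have "rel_abund_vec 2 Q1 \<and> rel_abund_vec 2 Q2 \<and>
            reference_set_with 2 Q1 Q2 {1} (2/3) \<and> reference_set_with 2 Q1 Q2 {2} (4/3) \<and>
            real (card {1::nat}) \<le> real 2 / 2 \<and> real (card {2::nat}) \<le> real 2 / 2 \<and>
            (1::nat) \<in> {1..2} \<and> null_hyp Q1 Q2 {1} 1 \<and> alt_hyp Q1 Q2 {2} 1"
    unfolding Q1_def Q2_def rel_abund_vec_def reference_set_with_def null_hyp_def alt_hyp_def
    by (simp add: numeral_2_eq_2)
  then show "\<exists>(d::nat) Q1 Q2 I01 I02 b1 b2 i.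
            rel_abund_vec d Q1 \<and> rel_abund_vec d Q2 \<and>
            reference_set_with d Q1 Q2 I01 b1 \<and> reference_set_with d Q1 Q2 I02 b2 \<and>
            real (card I01) \<le> real d / 2 \<and> real (card I02) \<le> real d / 2 \<and>
            i \<in> {1..d} \<and> null_hyp Q1 Q2 I01 i \<and> alt_hyp Q1 Q2 I02 i" by blast
qed

end
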